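(* For every real $p\geq 0$ and every integer $n\geq 2$, $$\sum_{k=1}^{n-1}\frac{\bar B_{2k}\bar B_{2n-2k}}{(2k)(2n-2k)}\,\frac{\Gamma(2k+p)\Gamma(2n-2k+p)}{\Gamma(2k)\Gamma(2n-2k)}=2\Gamma(p+1)\sum_{k=1}^{n}\frac{B_{2k}\bar B_{2n-2k}}{(2k)!\,(2n-2k)!}\,\frac{\Gamma(2k+p)\Gamma(2n+2p)}{\Gamma(2p+2k+1)}+2\,\frac{\bar B_{2n}\Gamma(2n+2p)}{(2n)!}\sum_{k=1}^{2n-1}\beta(p+k,p+1).$$
   Context: $B_n$ denotes the Bernoulli numbers, defined by $\frac{x}{e^x-1}=\sum_{n\ge 0}B_n\frac{x^n}{n!}$ (so $B_0=1$). $\bar B_n:=\frac{1-2^{n-1}}{2^{n-1}}B_n$ (so $\bar B_0=1$). $\Gamma$ is the Gamma function and $\beta(a,b)=\frac{\Gamma(a)\Gamma(b)}{\Gamma(a+b)}$ is the Euler beta function. *)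

theory Defs
  imports "HOL-Analysis.Analysis" "HOL-Computational_Algebra.Formal_Power_Series"
begin

text \<open>Bernoulli numbers via the exponential generating function x/(e^x - 1) = sum B_n x^n/n!
  (so B_0 = 1, B_1 = -1/2), as a formal power series.\<close>
definition bernoulli :: "nat \<Rightarrow> real" where
  "bernoulli n = fact n * fps_nth (fps_X / (fps_exp 1 - 1)) n"

text \<open>Bbar_n = (1 - 2^(n-1)) / 2^(n-1) * B_n, with real exponent n-1 (so Bbar_0 = 1).\<close>
definition bernoulli_bar :: "nat \<Rightarrow> real" where
  "bernoulli_bar n = (1 - 2 powr (real n - 1)) / 2 powr (real n - 1) * bernoulli n"

end

theory Submission
  imports Defs
begin

definition fsc :: "real \<Rightarrow> real fps \<Rightarrow> real fps" where
  "fsc c f = Abs_fps (\<lambda>m. c^m * fps_nth f m)"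

lemma fsc_nth [simp]: "fps_nth (fsc c f) m = c^m * fps_nth f m" by (simp add: fsc_def)

lemma fsc_mult: "fsc c (f * g) = fsc c f * fsc c g"
proof (rule fps_ext)
  fix n
  have "fps_nth (fsc c (f*g)) n = (\<Sum>i=0..n. (c^i * fps_nth f i) * (c^(n-i) * fps_nth g (n-i)))"
    by (simp add: fps_mult_nth sum_distrib_left algebra_simps power_add[symmetric])
  also have "\<dots> = fps_nth (fsc c f * fsc c g) n" by (simp add: fps_mult_nth)
  finally show "fps_nth (fsc c (f*g)) n = fps_nth (fsc c f * fsc c g) n" .
qed

lemma fsc_add: "fsc c (f + g) = fsc c f + fsc c g"
  by (rule fps_ext) (simp add: algebra_simps)
lemma fsc_diff: "fsc c (f - g) = fsc c f - fsc c g"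
  by (rule fps_ext) (simp add: algebra_simps)
lemma fsc_one [simp]: "fsc c 1 = 1"
  by (rule fps_ext) (simp)
lemma fsc_const [simp]: "fsc c (fps_const a) = fps_const a"
  by (rule fps_ext) (simp)
lemma fsc_X [simp]: "fsc c fps_X = fps_const c * fps_X"
  by (rule fps_ext) (simp add: fps_X_def)
lemma fsc_exp [simp]: "fsc c (fps_exp a) = fps_exp (c * a)"
  by (rule fps_ext) (simp add: power_mult_distrib)

definition GG :: "real fps" where "GG = fps_X / (fps_exp 1 - 1)"
abbreviation DD :: "real \<Rightarrow> real fps" where "DD c \<equiv> fps_exp c - 1"

lemma DD_nz: "c \<noteq> 0 \<Longrightarrow> DD c \<noteq> 0"
proof
  assume "c \<noteq> 0" "DD c = 0"
  then have "fps_nth (DD c) 1 = 0" by simp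
  with \<open>c \<noteq> 0\<close> show False by simp
qed

lemma GG_mul: "GG * DD 1 = fps_X"
  unfolding GG_def
proof (rule fps_times_divide_eq)
  show "DD 1 \<noteq> 0" using DD_nz by simp
  have "subdegree (DD 1) \<le> 1" by (rule subdegree_leI) simp
  then show "subdegree (fps_X :: real fps) \<ge> subdegree (DD 1)" by simp
qed

lemma GG_mul_sc: "fsc c GG * DD c = fps_const c * fps_X"
proof -
  have "fsc c (GG * DD 1) = fsc c fps_X" by (simp add: GG_mul)
  then show ?thesis by (simp add: fsc_mult fsc_diff)
qed

definition HH :: "real fps" where "HH = GG * fps_exp (1/2)"
definition KK :: "real fps" where "KK = GG + fps_const (1/2) * fps_X"

lemma exp_split: "fps_exp (a::real) * fps_exp b = fps_exp (a + b)"
  by (simp add: fps_exp_add_mult)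

lemma HH_mul: "HH * DD 1 = fps_X * fps_exp (1/2)"
  unfolding HH_def using GG_mul by (metis mult.assoc mult.commute)

lemma HH_sc_mul: "fsc c HH * DD c = fps_const c * fps_X * fps_exp (c/2)"
proof -
  have "fsc c HH * DD c = (fsc c GG * DD c) * fps_exp (c/2)"
    by (simp add: HH_def fsc_mult ac_simps)
  then show ?thesis by (simp add: GG_mul_sc)
qed

lemma alg1: fixes C a h X E :: "'a::comm_ring_1"
  assumes "C = a + a" "h * C = a"
  shows "C*X + h*(C*X)*(E-1) = a*X*(E+1)"
proof -
  have "h*(C*X)*(E-1) = (h*C)*X*(E-1)" by (simp add: ac_simps)
  also have "\<dots> = a*X*(E-1)" using assms(2) by simp
  finally show ?thesis using assms(1) by (simp add: algebra_simps)
qed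

lemma alg2: fixes a b X p Eu Ev :: "'a::comm_ring_1"
  shows "(b+b)*(a*X*(Eu+1))*(X*p)*(Ev-1) + (a+a)*(b*X*(Ev+1))*(X*p)*(Eu-1)
     = (a+a)*X*(b+b)*X*p*(Eu*Ev-1)"
  by (simp add: algebra_simps)

lemma const_half: "fps_const (c::real) = fps_const (c/2) + fps_const (c/2)"
  by (simp add: fps_const_add[symmetric])

lemma KK_sc_mul: "fsc c KK * DD c = fps_const (c/2) * fps_X * (fps_exp c + 1)"
proof -
  have "fsc c KK * DD c = fsc c GG * DD c + fps_const (1/2) * (fps_const c * fps_X) * DD c"
    by (simp add: KK_def fsc_add fsc_mult algebra_simps)
  also have "\<dots> = fps_const c * fps_X + fps_const (1/2) * (fps_const c * fps_X) * DD c"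
    by (simp add: GG_mul_sc)
  also have "\<dots> = fps_const (c/2) * fps_X * (fps_exp c + 1)"
    by (rule alg1[OF const_half]) (simp add: fps_const_mult[symmetric])
  finally show ?thesis .
qed

lemma main_fps:
  assumes "u \<noteq> 0" "v \<noteq> 0" "u + v = 1"
  shows "fsc u HH * fsc v HH = fps_const v * (fsc u KK * HH) + fps_const u * (fsc v KK * HH)"
proof -
  let ?N = "DD u * DD v * DD 1"
  have nz: "?N \<noteq> 0" using DD_nz assms by simp
  have e: "fps_exp 1 = fps_exp u * fps_exp v" using assms by (simp add: exp_split)
  have e2: "fps_exp (u/2) * fps_exp (v/2) = fps_exp (1/2)" using assms
    by (simp add: exp_split add_divide_distrib[symmetric])
  have "fsc u HH * fsc v HH * ?N = (fsc u HH * DD u) * (fsc v HH * DD v) * DD 1"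
    by (simp add: ac_simps)
  also have "\<dots> = fps_const u * fps_X * fps_const v * fps_X * (fps_exp (u/2) * fps_exp (v/2)) * DD 1"
    by (simp add: HH_sc_mul ac_simps)
  also have "\<dots> = fps_const u * fps_X * fps_const v * fps_X * fps_exp (1/2) * (fps_exp u * fps_exp v - 1)"
    by (simp add: e2 e[symmetric])
  also have "\<dots> = (fps_const (u/2) + fps_const (u/2)) * fps_X * (fps_const (v/2) + fps_const (v/2)) * fps_X * fps_exp (1/2) * (fps_exp u * fps_exp v - 1)"
    by (simp only: const_half[symmetric])
  also have "\<dots> = (fps_const (v/2) + fps_const (v/2)) * (fps_const (u/2) * fps_X * (fps_exp u + 1)) * (fps_X * fps_exp (1/2)) * DD v
      + (fps_const (u/2) + fps_const (u/2)) * (fps_const (v/2) * fps_X * (fps_exp v + 1)) * (fps_X * fps_exp (1/2)) * DD u"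
    by (rule alg2[symmetric])
  also have "\<dots> = fps_const v * (fsc u KK * DD u) * (HH * DD 1) * DD v + fps_const u * (fsc v KK * DD v) * (HH * DD 1) * DD u"
    by (simp only: KK_sc_mul HH_mul const_half[symmetric])
  also have "\<dots> = (fps_const v * (fsc u KK * HH) + fps_const u * (fsc v KK * HH)) * ?N"
    by (simp add: algebra_simps)
  finally show ?thesis using nz by simp
qed

lemma fsc_1 [simp]: "fsc 1 f = f" by (rule fps_ext) simp

lemma alg3: fixes p m X :: "'a::comm_ring_1" assumes "p*m = 1"
  shows "-(X*m*(p*p-1)) = X*p*(m*m-1)"
proof -
  have "X*m*(p*p-1) = X*p*(p*m) - X*m" by (simp add: algebra_simps)
  also have "\<dots> = X*p - X*m" using assms by simp
  finally have 1: "X*m*(p*p-1) = X*p - X*m" .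
  have "X*p*(m*m-1) = X*m*(p*m) - X*p" by (simp add: algebra_simps)
  also have "\<dots> = X*m - X*p" using assms by simp
  finally show ?thesis using 1 by simp
qed

lemma alg4: fixes P M h X :: "'a::comm_ring_1" assumes "P*M = 1"
  shows "h*X*(P+1)*(M-1) = -h*X*(M+1)*(P-1)"
proof -
  have "h*X*(P+1)*(M-1) = h*X*(P*M) - h*X*P + h*X*M - h*X" by (simp add: algebra_simps)
  moreover have "-h*X*(M+1)*(P-1) = -h*X*(P*M) + h*X*M - h*X*P + h*X" by (simp add: algebra_simps)
  ultimately show ?thesis using assms by simp
qed

lemma exp_half: "fps_exp (c::real) = fps_exp (c/2) * fps_exp (c/2)"
  by (simp add: exp_split)

lemma exp_inv: "fps_exp (c::real) * fps_exp (-c) = 1"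
  by (simp add: exp_split)

lemma m1: "fps_const (-1::real) = -1" by (simp add: fps_const_neg)

lemma HH_even: "fsc (-1) HH = HH"
proof -
  let ?N = "DD (-1) * DD 1"
  have nz: "?N \<noteq> 0" using DD_nz by simp
  have "fsc (-1) HH * ?N = (fsc (-1) HH * DD (-1)) * DD 1" by (simp add: ac_simps)
  also have "\<dots> = (fps_const (-1) * fps_X * fps_exp (-1/2)) * (fps_exp 1 - 1)"
    by (simp only: HH_sc_mul)
  also have "\<dots> = -(fps_X * fps_exp (-1/2) * (fps_exp (1/2) * fps_exp (1/2) - 1))"
    by (simp only: m1 exp_half[of 1]) simp
  also have "\<dots> = fps_X * fps_exp (1/2) * (fps_exp (-1/2) * fps_exp (-1/2) - 1)"
    by (rule alg3) (simp add: exp_split)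
  also have "\<dots> = HH * ?N" by (simp add: HH_mul[symmetric] exp_split ac_simps)
  finally show ?thesis using nz by simp
qed

lemma KK_even: "fsc (-1) KK = KK"
proof -
  let ?N = "DD (-1) * DD 1"
  have nz: "?N \<noteq> 0" using DD_nz by simp
  have k1: "KK * DD 1 = fps_const (1/2) * fps_X * (fps_exp 1 + 1)"
    using KK_sc_mul[of 1] by (simp only: fsc_1)
  have "KK * ?N = (KK * DD 1) * DD (-1)" by (simp only: mult_ac)
  also have "\<dots> = fps_const (1/2) * fps_X * (fps_exp 1 + 1) * (fps_exp (-1) - 1)"
    by (simp only: k1)
  also have "\<dots> = - fps_const (1/2) * fps_X * (fps_exp (-1) + 1) * (fps_exp 1 - 1)"
    by (rule alg4) (simp add: exp_split)
  also have "\<dots> = fps_const (-1/2) * fps_X * (fps_exp (-1) + 1) * (fps_exp 1 - 1)"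
    by (simp add: fps_const_neg)
  also have "\<dots> = (fsc (-1) KK * DD (-1)) * DD 1" by (simp only: KK_sc_mul)
  also have "\<dots> = fsc (-1) KK * ?N" by (simp only: mult_ac)
  finally show ?thesis using nz by simp
qed

lemma HH_GG: "HH = fps_const 2 * fsc (1/2) GG - GG"
proof -
  have nz: "DD 1 \<noteq> 0" using DD_nz by simp
  have g: "fsc (1/2) GG * DD (1/2) = fps_const (1/2) * fps_X" using GG_mul_sc[of "1/2"] by simp
  have d: "DD 1 = DD (1/2) * (fps_exp (1/2) + 1)"
    by (subst exp_half) (simp add: algebra_simps)
  have "(fps_const 2 * fsc (1/2) GG - GG) * DD 1
      = fps_const 2 * (fsc (1/2) GG * DD (1/2)) * (fps_exp (1/2) + 1) - GG * DD 1"
    by (simp add: d algebra_simps)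
  also have "\<dots> = (fps_const 2 * fps_const (1/2)) * fps_X * (fps_exp (1/2) + 1) - fps_X"
    by (simp add: g GG_mul ac_simps)
  also have "fps_const 2 * fps_const (1/2) = (1 :: real fps)"
    by (simp add: fps_const_mult[symmetric])
  also have "1 * fps_X * (fps_exp (1/2) + 1) - fps_X = HH * DD 1"
    by (simp only: HH_mul) (simp add: algebra_simps)
  finally show ?thesis using nz by simp
qed

lemma odd_zero: assumes "fsc (-1) F = F" "odd m" shows "fps_nth F m = 0"
proof -
  have "fps_nth (fsc (-1) F) m = fps_nth F m" using assms by simp
  with assms(2) show ?thesis by simp
qed

lemma GG_0: "fps_nth GG 0 = 1"
proof -
  have "fps_nth (GG * DD 1) 1 = 1" by (simp add: GG_mul)
  then show ?thesis by (simp add: fps_mult_nth_1)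
qed

lemma HH_nth: "fps_nth HH m = (2 * (1/2)^m - 1) * fps_nth GG m"
  by (subst HH_GG) (simp add: algebra_simps)

lemma HH_0: "fps_nth HH 0 = 1" by (simp add: HH_nth GG_0)
lemma KK_0: "fps_nth KK 0 = 1" by (simp add: KK_def GG_0)
lemma KK_nth: "m \<noteq> 1 \<Longrightarrow> fps_nth KK m = fps_nth GG m" by (simp add: KK_def)

lemma bern_GG: "bernoulli m = fact m * fps_nth GG m"
  by (simp add: bernoulli_def GG_def)

lemma bbar_HH: "bernoulli_bar m = fact m * fps_nth HH m"
proof -
  have p: "(2::real) powr (real m - 1) = 2^m / 2"
    by (simp add: powr_diff powr_realpow)
  have "(1 - 2 powr (real m - 1)) / 2 powr (real m - 1) = 2 * (1/2)^m - (1::real)"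
    unfolding p by (simp add: field_simps power_one_over)
  then show ?thesis by (simp add: bernoulli_bar_def bern_GG HH_nth)
qed

lemma sum_even:
  fixes f :: "nat \<Rightarrow> real" and n :: nat
  assumes "\<And>i. odd i \<Longrightarrow> f i = (0::real)"
  shows "(\<Sum>i=0..2*n. f i) = (\<Sum>k=0..n. f (2*k))"
proof (induction n)
  case 0 then show ?case by simp
next
  case (Suc n)
  have "(\<Sum>i=0..2*Suc n. f i) = (\<Sum>i=0..2*n. f i) + f (2*n+1) + f (2*n+2)"
    by (simp add: numeral_2_eq_2)
  also have "f (2*n+1) = 0" using assms by simp
  finally show ?case using Suc by simp
qed

lemma geo_tel: "(\<Sum>k=1..(m::nat). t^k * (1 - t)) = t - (t::real)^(m+1)"
  by (induction m) (auto simp: algebra_simps)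

definition hh where "hh m = fps_nth HH m"
definition kk where "kk m = fps_nth KK m"

lemma coeff_id:
  assumes "t \<noteq> 0" "t \<noteq> 1"
  shows "(\<Sum>k=0..n. hh (2*k) * hh (2*n-2*k) * (t^(2*k) * (1-t)^(2*n-2*k)))
       = (\<Sum>k=0..n. hh (2*n-2*k) * kk (2*k) * ((1-t) * t^(2*k) + t * (1-t)^(2*k)))"
proof -
  let ?v = "1 - t"
  have m: "fsc t HH * fsc ?v HH = fps_const ?v * (fsc t KK * HH) + fps_const t * (fsc ?v KK * HH)"
    using assms by (intro main_fps) auto
  have "fps_nth (fsc t HH * fsc ?v HH) (2*n) = fps_nth (fps_const ?v * (fsc t KK * HH) + fps_const t * (fsc ?v KK * HH)) (2*n)"
    using m by simp
  then have "fps_nth (fsc t HH * fsc ?v HH) (2*n) = ?v * fps_nth (fsc t KK * HH) (2*n) + t * fps_nth (fsc ?v KK * HH) (2*n)"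
    by (simp only: fps_add_nth fps_mult_left_const_nth)
  then have e: "(\<Sum>i=0..2*n. (t^i * hh i) * (?v^(2*n-i) * hh (2*n-i)))
      = ?v * (\<Sum>i=0..2*n. (t^i * kk i) * hh (2*n-i)) + t * (\<Sum>i=0..2*n. (?v^i * kk i) * hh (2*n-i))"
    by (simp only: fps_add_nth fps_mult_left_const_nth fps_mult_nth fsc_nth hh_def kk_def)
  have hodd: "odd i \<Longrightarrow> hh i = 0" for i unfolding hh_def by (rule odd_zero[OF HH_even])
  have kodd: "odd i \<Longrightarrow> kk i = 0" for i unfolding kk_def by (rule odd_zero[OF KK_even])
  have "(\<Sum>i=0..2*n. (t^i * hh i) * (?v^(2*n-i) * hh (2*n-i))) = (\<Sum>k=0..n. (t^(2*k) * hh (2*k)) * (?v^(2*n-2*k) * hh (2*n-2*k)))"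
    by (rule sum_even) (simp add: hodd)
  moreover have "(\<Sum>i=0..2*n. (t^i * kk i) * hh (2*n-i)) = (\<Sum>k=0..n. (t^(2*k) * kk (2*k)) * hh (2*n-2*k))"
    by (rule sum_even) (simp add: kodd)
  moreover have "(\<Sum>i=0..2*n. (?v^i * kk i) * hh (2*n-i)) = (\<Sum>k=0..n. (?v^(2*k) * kk (2*k)) * hh (2*n-2*k))"
    by (rule sum_even) (simp add: kodd)
  ultimately have e2: "(\<Sum>k=0..n. (t^(2*k) * hh (2*k)) * (?v^(2*n-2*k) * hh (2*n-2*k)))
      = ?v * (\<Sum>k=0..n. (t^(2*k) * kk (2*k)) * hh (2*n-2*k)) + t * (\<Sum>k=0..n. (?v^(2*k) * kk (2*k)) * hh (2*n-2*k))"
    using e by simp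
  have r: "?v * (\<Sum>k=0..n. (t^(2*k) * kk (2*k)) * hh (2*n-2*k)) + t * (\<Sum>k=0..n. (?v^(2*k) * kk (2*k)) * hh (2*n-2*k))
     = (\<Sum>k=0..n. ?v * ((t^(2*k) * kk (2*k)) * hh (2*n-2*k)) + t * ((?v^(2*k) * kk (2*k)) * hh (2*n-2*k)))"
    by (simp only: sum_distrib_left sum.distrib)
  have "(\<Sum>k=0..n. hh (2*k) * hh (2*n-2*k) * (t^(2*k) * (1-t)^(2*n-2*k)))
      = (\<Sum>k=0..n. (t^(2*k) * hh (2*k)) * (?v^(2*n-2*k) * hh (2*n-2*k)))"
    by (rule sum.cong) (simp_all add: ac_simps)
  also have "\<dots> = (\<Sum>k=0..n. ?v * ((t^(2*k) * kk (2*k)) * hh (2*n-2*k)) + t * ((?v^(2*k) * kk (2*k)) * hh (2*n-2*k)))"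
    using e2 r by simp
  also have "\<dots> = (\<Sum>k=0..n. hh (2*n-2*k) * kk (2*k) * ((1-t) * t^(2*k) + t * (1-t)^(2*k)))"
    by (rule sum.cong) (simp_all add: algebra_simps)
  finally show ?thesis .
qed

lemma poly_id:
  assumes "t \<noteq> 0" "t \<noteq> 1" "n \<ge> 1"
  shows "(\<Sum>k=1..n-1. hh (2*k) * hh (2*n-2*k) * (t^(2*k) * (1-t)^(2*n-2*k)))
       = (\<Sum>k=1..n. hh (2*n-2*k) * kk (2*k) * ((1-t) * t^(2*k) + t * (1-t)^(2*k)))
         + hh (2*n) * (\<Sum>k=1..2*n-1. t^k * (1-t) + (1-t)^k * t)"
proof -
  obtain m where n: "n = Suc m" using assms(3) by (cases n) auto
  have h0: "hh 0 = 1" by (simp add: hh_def HH_0)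
  have k0: "kk 0 = 1" by (simp add: kk_def KK_0)
  let ?f = "\<lambda>k. hh (2*k) * hh (2*n-2*k) * (t^(2*k) * (1-t)^(2*n-2*k))"
  let ?g = "\<lambda>k. hh (2*n-2*k) * kk (2*k) * ((1-t) * t^(2*k) + t * (1-t)^(2*k))"
  have L: "(\<Sum>k=0..n. ?f k) = hh (2*n) * (1-t)^(2*n) + (\<Sum>k=1..n-1. ?f k) + hh (2*n) * t^(2*n)"
  proof -
    have a: "(\<Sum>k=0..n. ?f k) = ?f 0 + (\<Sum>k=1..n. ?f k)" by (simp add: sum.atLeast_Suc_atMost)
    have b: "(\<Sum>k=1..n. ?f k) = (\<Sum>k=1..n-1. ?f k) + ?f n" unfolding n by simp
    show ?thesis unfolding a b by (simp add: h0)
  qed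
  have R: "(\<Sum>k=0..n. ?g k) = hh (2*n) + (\<Sum>k=1..n. ?g k)"
    by (simp add: sum.atLeast_Suc_atMost k0)
  have g1: "(\<Sum>k=1..2*n-1. t^k * (1-t)) = t - t^(2*n)"
    using geo_tel[of t "2*n-1"] assms(3) by simp
  have g2: "(\<Sum>k=1..2*n-1. (1-t)^k * t) = (1-t) - (1-t)^(2*n)"
    using geo_tel[of "1-t" "2*n-1"] assms(3) by simp
  have Q: "(\<Sum>k=1..2*n-1. t^k * (1-t) + (1-t)^k * t) = 1 - t^(2*n) - (1-t)^(2*n)"
    using g1 g2 by (simp add: sum.distrib)
  have Q2: "hh (2*n) * (\<Sum>k=1..2*n-1. t^k * (1-t) + (1-t)^k * t) = hh (2*n) - hh (2*n) * t^(2*n) - hh (2*n) * (1-t)^(2*n)"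
    unfolding Q by (simp add: algebra_simps)
  have C: "(\<Sum>k=0..n. ?f k) = (\<Sum>k=0..n. ?g k)" by (rule coeff_id[OF assms(1,2)])
  show ?thesis using C L R Q2 by linarith
qed

definition WW :: "real \<Rightarrow> real \<Rightarrow> real" where
  "WW p t = t powr (p - 1) * (1 - t) powr (p - 1)"

lemma I1:
  assumes "p \<ge> 0" "a \<ge> 1" "b \<ge> 1"
  shows "((\<lambda>t. t^a * (1-t)^b * WW p t) has_integral Beta (real a + p) (real b + p)) {0<..<1}"
proof -
  have "((\<lambda>t. t powr (real a + p - 1) * (1 - t) powr (real b + p - 1)) has_integral Beta (real a + p) (real b + p)) {0..1}"
    using assms by (intro has_integral_Beta_real) auto
  then have i: "((\<lambda>t. t powr (real a + p - 1) * (1 - t) powr (real b + p - 1)) has_integral Beta (real a + p) (real b + p)) {0<..<1}"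
    by (simp add: has_integral_Icc_iff_Ioo)
  show ?thesis
  proof (subst has_integral_cong)
    fix t :: real assume "t \<in> {0<..<1}"
    then have t: "t > 0" "1 - t > 0" by auto
    have "t powr (real a + p - 1) = t^a * t powr (p - 1)"
      using t by (simp add: powr_add[symmetric] powr_realpow[symmetric] add_diff_eq)
    moreover have "(1-t) powr (real b + p - 1) = (1-t)^b * (1-t) powr (p - 1)"
      using t by (simp add: powr_add[symmetric] powr_realpow[symmetric] add_diff_eq)
    ultimately show "t^a * (1-t)^b * WW p t = t powr (real a + p - 1) * (1 - t) powr (real b + p - 1)"
      by (simp add: WW_def)
  qed (rule i)
qed

lemma beta_id:
  assumes p: "p \<ge> 0" and n: "n \<ge> 1"
  shows "(\<Sum>k=1..n-1. hh (2*k) * hh (2*n-2*k) * Beta (real (2*k) + p) (real (2*n-2*k) + p))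
    = (\<Sum>k=1..n. hh (2*n-2*k) * kk (2*k) * Beta (real (2*k) + p) (real 1 + p))
    + (\<Sum>k=1..n. hh (2*n-2*k) * kk (2*k) * Beta (real 1 + p) (real (2*k) + p))
    + hh (2*n) * ((\<Sum>k=1..2*n-1. Beta (real k + p) (real 1 + p)) + (\<Sum>k=1..2*n-1. Beta (real 1 + p) (real k + p)))"
proof -
  let ?S = "{0<..<1::real}"
  have HL: "((\<lambda>t. \<Sum>k=1..n-1. hh (2*k) * hh (2*n-2*k) * (t^(2*k) * (1-t)^(2*n-2*k) * WW p t))
     has_integral (\<Sum>k=1..n-1. hh (2*k) * hh (2*n-2*k) * Beta (real (2*k) + p) (real (2*n-2*k) + p))) ?S"
    by (intro has_integral_sum finite_atLeastAtMost has_integral_mult_right I1) (use p in auto)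
  have R1: "((\<lambda>t. \<Sum>k=1..n. hh (2*n-2*k) * kk (2*k) * (t^(2*k) * (1-t)^1 * WW p t))
     has_integral (\<Sum>k=1..n. hh (2*n-2*k) * kk (2*k) * Beta (real (2*k) + p) (real 1 + p))) ?S"
    by (intro has_integral_sum finite_atLeastAtMost has_integral_mult_right I1) (use p in auto)
  have R2: "((\<lambda>t. \<Sum>k=1..n. hh (2*n-2*k) * kk (2*k) * (t^1 * (1-t)^(2*k) * WW p t))
     has_integral (\<Sum>k=1..n. hh (2*n-2*k) * kk (2*k) * Beta (real 1 + p) (real (2*k) + p))) ?S"
    by (intro has_integral_sum finite_atLeastAtMost has_integral_mult_right I1) (use p in auto)
  have R3: "((\<lambda>t. \<Sum>k=1..2*n-1. t^k * (1-t)^1 * WW p t)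
     has_integral (\<Sum>k=1..2*n-1. Beta (real k + p) (real 1 + p))) ?S"
    by (intro has_integral_sum finite_atLeastAtMost I1) (use p in auto)
  have R4: "((\<lambda>t. \<Sum>k=1..2*n-1. t^1 * (1-t)^k * WW p t)
     has_integral (\<Sum>k=1..2*n-1. Beta (real 1 + p) (real k + p))) ?S"
    by (intro has_integral_sum finite_atLeastAtMost I1) (use p in auto)
  have HR: "((\<lambda>t. (\<Sum>k=1..n. hh (2*n-2*k) * kk (2*k) * (t^(2*k) * (1-t)^1 * WW p t))
       + (\<Sum>k=1..n. hh (2*n-2*k) * kk (2*k) * (t^1 * (1-t)^(2*k) * WW p t))
       + hh (2*n) * ((\<Sum>k=1..2*n-1. t^k * (1-t)^1 * WW p t) + (\<Sum>k=1..2*n-1. t^1 * (1-t)^k * WW p t)))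
     has_integral ((\<Sum>k=1..n. hh (2*n-2*k) * kk (2*k) * Beta (real (2*k) + p) (real 1 + p))
    + (\<Sum>k=1..n. hh (2*n-2*k) * kk (2*k) * Beta (real 1 + p) (real (2*k) + p))
    + hh (2*n) * ((\<Sum>k=1..2*n-1. Beta (real k + p) (real 1 + p)) + (\<Sum>k=1..2*n-1. Beta (real 1 + p) (real k + p))))) ?S"
    by (intro has_integral_add has_integral_mult_right R1 R2 R3 R4)
  have eq: "(\<Sum>k=1..n-1. hh (2*k) * hh (2*n-2*k) * (t^(2*k) * (1-t)^(2*n-2*k) * WW p t))
      = (\<Sum>k=1..n. hh (2*n-2*k) * kk (2*k) * (t^(2*k) * (1-t)^1 * WW p t))
       + (\<Sum>k=1..n. hh (2*n-2*k) * kk (2*k) * (t^1 * (1-t)^(2*k) * WW p t))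
       + hh (2*n) * ((\<Sum>k=1..2*n-1. t^k * (1-t)^1 * WW p t) + (\<Sum>k=1..2*n-1. t^1 * (1-t)^k * WW p t))"
    if t: "t \<in> ?S" for t
  proof -
    have P: "(\<Sum>k=1..n-1. hh (2*k) * hh (2*n-2*k) * (t^(2*k) * (1-t)^(2*n-2*k)))
       = (\<Sum>k=1..n. hh (2*n-2*k) * kk (2*k) * ((1-t) * t^(2*k) + t * (1-t)^(2*k)))
         + hh (2*n) * (\<Sum>k=1..2*n-1. t^k * (1-t) + (1-t)^k * t)"
      using t n by (intro poly_id) auto
    have "(\<Sum>k=1..n-1. hh (2*k) * hh (2*n-2*k) * (t^(2*k) * (1-t)^(2*n-2*k) * WW p t))
       = (\<Sum>k=1..n-1. hh (2*k) * hh (2*n-2*k) * (t^(2*k) * (1-t)^(2*n-2*k))) * WW p t"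
      by (simp add: sum_distrib_right mult.assoc)
    also have "\<dots> = ((\<Sum>k=1..n. hh (2*n-2*k) * kk (2*k) * ((1-t) * t^(2*k) + t * (1-t)^(2*k)))
         + hh (2*n) * (\<Sum>k=1..2*n-1. t^k * (1-t) + (1-t)^k * t)) * WW p t"
      by (simp only: P)
    also have "\<dots> = (\<Sum>k=1..n. hh (2*n-2*k) * kk (2*k) * (t^(2*k) * (1-t)^1 * WW p t))
       + (\<Sum>k=1..n. hh (2*n-2*k) * kk (2*k) * (t^1 * (1-t)^(2*k) * WW p t))
       + hh (2*n) * ((\<Sum>k=1..2*n-1. t^k * (1-t)^1 * WW p t) + (\<Sum>k=1..2*n-1. t^1 * (1-t)^k * WW p t))"
    proof -
      have a1: "(\<Sum>k=1..n. hh (2*n-2*k) * kk (2*k) * ((1-t) * t^(2*k) + t * (1-t)^(2*k))) * WW p t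
        = (\<Sum>k=1..n. hh (2*n-2*k) * kk (2*k) * (t^(2*k) * (1-t)^1 * WW p t))
         + (\<Sum>k=1..n. hh (2*n-2*k) * kk (2*k) * (t^1 * (1-t)^(2*k) * WW p t))"
        by (simp only: sum_distrib_right sum.distrib[symmetric]) (rule sum.cong, simp_all add: algebra_simps)
      have a2: "(\<Sum>k=1..2*n-1. t^k * (1-t) + (1-t)^k * t) * WW p t
        = (\<Sum>k=1..2*n-1. t^k * (1-t)^1 * WW p t) + (\<Sum>k=1..2*n-1. t^1 * (1-t)^k * WW p t)"
        by (simp only: sum_distrib_right sum.distrib[symmetric]) (rule sum.cong, simp_all add: algebra_simps)
      have "((\<Sum>k=1..n. hh (2*n-2*k) * kk (2*k) * ((1-t) * t^(2*k) + t * (1-t)^(2*k)))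
         + hh (2*n) * (\<Sum>k=1..2*n-1. t^k * (1-t) + (1-t)^k * t)) * WW p t
         = (\<Sum>k=1..n. hh (2*n-2*k) * kk (2*k) * ((1-t) * t^(2*k) + t * (1-t)^(2*k))) * WW p t
         + hh (2*n) * ((\<Sum>k=1..2*n-1. t^k * (1-t) + (1-t)^k * t) * WW p t)"
        by (simp only: distrib_right mult.assoc)
      then show ?thesis by (simp only: a1 a2)
    qed
    finally show ?thesis .
  qed
  have HL': "((\<lambda>t. (\<Sum>k=1..n. hh (2*n-2*k) * kk (2*k) * (t^(2*k) * (1-t)^1 * WW p t))
       + (\<Sum>k=1..n. hh (2*n-2*k) * kk (2*k) * (t^1 * (1-t)^(2*k) * WW p t))
       + hh (2*n) * ((\<Sum>k=1..2*n-1. t^k * (1-t)^1 * WW p t) + (\<Sum>k=1..2*n-1. t^1 * (1-t)^k * WW p t)))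
     has_integral (\<Sum>k=1..n-1. hh (2*k) * hh (2*n-2*k) * Beta (real (2*k) + p) (real (2*n-2*k) + p))) ?S"
    using HL by (subst (asm) has_integral_cong[OF eq]) auto
  show ?thesis using has_integral_unique[OF HL' HR] .
qed

lemma fact_Gamma: "m \<ge> 1 \<Longrightarrow> (fact m :: real) = real m * Gamma (real m)"
proof -
  assume "m \<ge> 1"
  then obtain j where m: "m = Suc j" by (cases m) auto
  have "Gamma (real m) = fact j" unfolding m using Gamma_fact[of j] by simp
  then show ?thesis unfolding m by simp
qed

lemma Gamma_Beta_mult:
  assumes "a > 0" "b > 0" "a + b = c"
  shows "Gamma c * Beta a b = Gamma a * Gamma (b::real)"
proof -
  have "Gamma c \<noteq> 0" using assms by (simp add: Gamma_real_pos less_imp_neq[symmetric])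
  then show ?thesis using assms(3) by (simp add: Beta_def)
qed

lemma aux:
  fixes r1 g1 r2 g2 x y Gm B :: real
  assumes "r1 * g1 \<noteq> 0" "r2 * g2 \<noteq> 0"
  shows "(r1*g1*x)*(r2*g2*y)/(r1*r2)*(Gm*B/(g1*g2)) = Gm * (x*y*B)"
  using assms by (simp add: field_simps)

lemma aux2:
  fixes f1 f2 Gd B Ga Gp Gm x h :: real
  assumes "f1 \<noteq> 0" "f2 \<noteq> 0" "Gd \<noteq> 0" "Gd * B = Ga * Gp"
  shows "Gp * ((f1*x)*(f2*h)/(f1*f2) * (Ga*Gm/Gd)) = Gm * (h*x*B)"
proof -
  have "B = Ga * Gp / Gd" using assms(3,4) by (simp add: field_simps)
  then show ?thesis using assms(1-3) by (simp add: field_simps)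
qed

theorem theorem4p2:
  fixes p :: real and n :: nat
  assumes "p \<ge> 0" and "n \<ge> 2"
  shows "(\<Sum>k=1..n-1. bernoulli_bar (2*k) * bernoulli_bar (2*n-2*k) / (real (2*k) * real (2*n-2*k))
            * (Gamma (real (2*k) + p) * Gamma (real (2*n-2*k) + p) / (Gamma (real (2*k)) * Gamma (real (2*n-2*k)))))
       = 2 * Gamma (p + 1) * (\<Sum>k=1..n. bernoulli (2*k) * bernoulli_bar (2*n-2*k) / (fact (2*k) * fact (2*n-2*k))
            * (Gamma (real (2*k) + p) * Gamma (real (2*n) + 2*p) / Gamma (2*p + real (2*k) + 1)))
         + 2 * (bernoulli_bar (2*n) * Gamma (real (2*n) + 2*p) / fact (2*n))
             * (\<Sum>k=1..2*n-1. Beta (p + real k) (p + 1))"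
proof -
  have p: "p \<ge> 0" and n1: "n \<ge> 1" using assms by auto
  define Gm where "Gm = Gamma (real (2*n) + 2*p)"
  have bb: "bernoulli_bar m = fact m * hh m" for m by (simp add: bbar_HH hh_def)
  have bk: "k \<ge> 1 \<Longrightarrow> bernoulli (2*k) = fact (2*k) * kk (2*k)" for k
    by (simp add: bern_GG kk_def KK_nth)
  have fnz: "(fact m :: real) \<noteq> 0" for m by simp
  have L: "(\<Sum>k=1..n-1. bernoulli_bar (2*k) * bernoulli_bar (2*n-2*k) / (real (2*k) * real (2*n-2*k))
            * (Gamma (real (2*k) + p) * Gamma (real (2*n-2*k) + p) / (Gamma (real (2*k)) * Gamma (real (2*n-2*k)))))
      = Gm * (\<Sum>k=1..n-1. hh (2*k) * hh (2*n-2*k) * Beta (real (2*k) + p) (real (2*n-2*k) + p))"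
    unfolding sum_distrib_left
  proof (rule sum.cong)
    fix k assume k: "k \<in> {1..n-1}"
    have f1: "(fact (2*k) :: real) = real (2*k) * Gamma (real (2*k))" using k by (intro fact_Gamma) auto
    have f2: "(fact (2*n-2*k) :: real) = real (2*n-2*k) * Gamma (real (2*n-2*k))" using k by (intro fact_Gamma) auto
    have g: "Gm * Beta (real (2*k) + p) (real (2*n-2*k) + p) = Gamma (real (2*k) + p) * Gamma (real (2*n-2*k) + p)"
      unfolding Gm_def using k p by (intro Gamma_Beta_mult) auto
    have nz1: "real (2*k) * Gamma (real (2*k)) \<noteq> 0" using f1 fnz by metis
    have nz2: "real (2*n-2*k) * Gamma (real (2*n-2*k)) \<noteq> 0" using f2 fnz by metis
    show "bernoulli_bar (2*k) * bernoulli_bar (2*n-2*k) / (real (2*k) * real (2*n-2*k))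
            * (Gamma (real (2*k) + p) * Gamma (real (2*n-2*k) + p) / (Gamma (real (2*k)) * Gamma (real (2*n-2*k))))
        = Gm * (hh (2*k) * hh (2*n-2*k) * Beta (real (2*k) + p) (real (2*n-2*k) + p))"
      using nz1 nz2 unfolding bb f1 f2 g[symmetric]
      by (intro aux) auto
  qed simp
  have R1: "Gamma (p + 1) * (\<Sum>k=1..n. bernoulli (2*k) * bernoulli_bar (2*n-2*k) / (fact (2*k) * fact (2*n-2*k))
            * (Gamma (real (2*k) + p) * Gamma (real (2*n) + 2*p) / Gamma (2*p + real (2*k) + 1)))
      = Gm * (\<Sum>k=1..n. hh (2*n-2*k) * kk (2*k) * Beta (real (2*k) + p) (real 1 + p))"
    unfolding sum_distrib_left
  proof (rule sum.cong)
    fix k assume k: "k \<in> {1..n}"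
    have g: "Gamma (2*p + real (2*k) + 1) * Beta (real (2*k) + p) (real 1 + p) = Gamma (real (2*k) + p) * Gamma (p + 1)"
      using k p by (subst Gamma_Beta_mult) (auto simp: add_ac)
    have nz: "Gamma (2*p + real (2*k) + 1) \<noteq> 0" using p by (simp add: Gamma_real_pos less_imp_neq[symmetric])
    show "Gamma (p + 1) * (bernoulli (2*k) * bernoulli_bar (2*n-2*k) / (fact (2*k) * fact (2*n-2*k))
            * (Gamma (real (2*k) + p) * Gamma (real (2*n) + 2*p) / Gamma (2*p + real (2*k) + 1)))
        = Gm * (hh (2*n-2*k) * kk (2*k) * Beta (real (2*k) + p) (real 1 + p))"
    proof -
      have b: "bernoulli (2*k) = fact (2*k) * kk (2*k)" using k bk by auto
      show ?thesis unfolding b bb Gm_def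
        by (rule aux2[OF fnz fnz nz g])
    qed
  qed simp
  have C1: "(\<Sum>k=1..n. hh (2*n-2*k) * kk (2*k) * Beta (real 1 + p) (real (2*k) + p))
      = (\<Sum>k=1..n. hh (2*n-2*k) * kk (2*k) * Beta (real (2*k) + p) (real 1 + p))"
    by (simp add: Beta_commute)
  have C2: "(\<Sum>k=1..2*n-1. Beta (real 1 + p) (real k + p)) = (\<Sum>k=1..2*n-1. Beta (p + real k) (p + 1))"
    by (simp add: Beta_commute add.commute)
  have C3: "(\<Sum>k=1..2*n-1. Beta (real k + p) (real 1 + p)) = (\<Sum>k=1..2*n-1. Beta (p + real k) (p + 1))"
    by (simp add: add.commute)
  have B: "bernoulli_bar (2*n) / fact (2*n) = hh (2*n)" unfolding bb by simp
  have main: "Gm * (\<Sum>k=1..n-1. hh (2*k) * hh (2*n-2*k) * Beta (real (2*k) + p) (real (2*n-2*k) + p))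
    = Gm * ((\<Sum>k=1..n. hh (2*n-2*k) * kk (2*k) * Beta (real (2*k) + p) (real 1 + p))
    + (\<Sum>k=1..n. hh (2*n-2*k) * kk (2*k) * Beta (real 1 + p) (real (2*k) + p))
    + hh (2*n) * ((\<Sum>k=1..2*n-1. Beta (real k + p) (real 1 + p)) + (\<Sum>k=1..2*n-1. Beta (real 1 + p) (real k + p))))"
    using beta_id[OF p n1] by simp
  define S where "S = (\<Sum>k=1..2*n-1. Beta (p + real k) (p + 1))"
  define A1 where "A1 = (\<Sum>k=1..n. hh (2*n-2*k) * kk (2*k) * Beta (real (2*k) + p) (real 1 + p))"
  define Lv where "Lv = (\<Sum>k=1..n-1. hh (2*k) * hh (2*n-2*k) * Beta (real (2*k) + p) (real (2*n-2*k) + p))"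
  define T where "T = (\<Sum>k=1..n. bernoulli (2*k) * bernoulli_bar (2*n-2*k) / (fact (2*k) * fact (2*n-2*k))
            * (Gamma (real (2*k) + p) * Gamma (real (2*n) + 2*p) / Gamma (2*p + real (2*k) + 1)))"
  have X: "2 * (bernoulli_bar (2*n) * Gamma (real (2*n) + 2*p) / fact (2*n)) * S = Gm * hh (2*n) * (2 * S)"
    unfolding bb Gm_def by simp
  have main': "Gm * Lv = Gm * (A1 + A1 + hh (2*n) * (S + S))"
    using main unfolding C1 C2 C3 S_def[symmetric] A1_def[symmetric] Lv_def[symmetric] .
  have R1': "Gamma (p + 1) * T = Gm * A1" using R1 unfolding T_def A1_def .
  have L': "(\<Sum>k=1..n-1. bernoulli_bar (2*k) * bernoulli_bar (2*n-2*k) / (real (2*k) * real (2*n-2*k))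
            * (Gamma (real (2*k) + p) * Gamma (real (2*n-2*k) + p) / (Gamma (real (2*k)) * Gamma (real (2*n-2*k)))))
      = Gm * Lv" using L unfolding Lv_def .
  show ?thesis
    unfolding L' T_def[symmetric] S_def[symmetric] X
    using main' R1' by (simp add: algebra_simps)
qed

end
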